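(* Let $r:\mathfrak h^*\to\wedge^2\mathfrak g$ be a triangular dynamical $r$-matrix and $\mathfrak g_\lambda=\mathfrak h+r(\lambda)^\#\mathfrak h^\perp$. Then $\dim\mathfrak g_\lambda-\dim\mathfrak h$ is independent of $\lambda\in\mathfrak h^*$ and is an even number (called $\mathrm{rank}\,r$). Moreover the Poisson manifold $(M,\pi)$, $M=\mathfrak h^*\times G$, $\pi=\sum_i\vec{h_i}\wedge\frac{\partial}{\partial\lambda^i}+\vec{r(\lambda)}$, is a regular Poisson manifold whose rank at every point equals $2\dim\mathfrak h+\mathrm{rank}\,r$.
   Context: Let $\mathfrak g$ be a finite-dimensional real Lie algebra and $\mathfrak h\subset\mathfrak g$ an abelian Lie subalgebra of dimension $l$ with basis $h_1,\dots,h_l$; $(\lambda^1,\dots,\lambda^l)$ are the induced linear coordinates on $\mathfrak h^*$. A triangular dynamical $r$-matrix is a smooth map $r:\mathfrak h^*\to\wedge^2\mathfrak g$ with $[h,r(\lambda)]=0$ for all $h\in\mathfrak h$ and $\sum_i h_i\wedge\frac{\partial r}{\partial\lambda^i}+\frac12[r,r]=0$ (Schouten-type bracket on $\wedge^\bullet\mathfrak g$). For $\rho\in\wedge^2\mathfrak g$, $\rho^\#:\mathfrak g^*\to\mathfrak g$ is $\langle\rho^\#\xi,\eta\rangle=\rho(\xi,\eta)$, and $\mathfrak h^\perp\subset\mathfrak g^*$ is the annihilator of $\mathfrak h$. $G$ is a connected Lie group with Lie algebra $\mathfrak g$, $M=\mathfrak h^*\times G$, and $\vec u$ denotes the left-invariant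 vector/multivector field on $M$ along the $G$-factor generated by $u\in\wedge^\bullet\mathfrak g$ (for $r(\lambda)$, pointwise in $\lambda$). The bivector $\pi$ is Poisson when $r$ is a triangular dynamical $r$-matrix. *)

theory Defs
  imports "HOL-Analysis.Analysis"
begin

text \<open>Finite-dimensional real Lie algebra: the underlying space is real^'n,
  the dual space is identified with real^'n via the dot product.\<close>

definition lie_algebra :: "(real^'n \<Rightarrow> real^'n \<Rightarrow> real^'n) \<Rightarrow> bool" where
  "lie_algebra br \<longleftrightarrow> bilinear br \<and> (\<forall>x y. br x y = - br y x)
     \<and> (\<forall>x y z. br x (br y z) + br y (br z x) + br z (br x y) = 0)"

fun C_k :: "nat \<Rightarrow> ('a::real_normed_vector \<Rightarrow> 'b::real_normed_vector) \<Rightarrow> bool" where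
  "C_k 0 f = continuous_on UNIV f"
| "C_k (Suc k) f = (continuous_on UNIV f \<and> (\<forall>x. f differentiable (at x))
      \<and> (\<forall>v. C_k k (\<lambda>x. frechet_derivative f (at x) v)))"

definition smooth_map :: "('a::real_normed_vector \<Rightarrow> 'b::real_normed_vector) \<Rightarrow> bool" where
  "smooth_map f \<longleftrightarrow> (\<forall>k. C_k k f)"

text \<open>Elements of wedge^2 g are represented by antisymmetric matrices R, viewed
  as the skew bilinear form rho(xi,eta) = xi . (R *v eta) on g*.
  Convention: (x wedge y)(xi,eta) = xi(x) eta(y) - xi(y) eta(x).\<close>

definition wedge2 :: "real^'n^'n \<Rightarrow> bool" where
  "wedge2 R \<longleftrightarrow> transpose R = - R"

definition biv :: "real^'n^'n \<Rightarrow> real^'n \<Rightarrow> real^'n \<Rightarrow> real" where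
  "biv R \<xi> \<eta> = \<xi> \<bullet> (R *v \<eta>)"

text \<open>rho^#: <rho^# xi, eta> = rho(xi, eta).\<close>
definition sharp :: "real^'n^'n \<Rightarrow> real^'n \<Rightarrow> real^'n" where
  "sharp R \<xi> = transpose R *v \<xi>"

text \<open>Transpose of ad_x acting on g*: <adT x xi, y> = <xi, [x,y]>.\<close>
definition adT :: "(real^'n \<Rightarrow> real^'n \<Rightarrow> real^'n) \<Rightarrow> real^'n \<Rightarrow> real^'n \<Rightarrow> real^'n" where
  "adT br x \<xi> = (\<chi> j. \<xi> \<bullet> br x (axis j 1))"

text \<open>[x, rho] = 0 in wedge^2 g (ad_x extended as a derivation).\<close>
definition ad_commutes :: "(real^'n \<Rightarrow> real^'n \<Rightarrow> real^'n) \<Rightarrow> real^'n \<Rightarrow> real^'n^'n \<Rightarrow> bool" where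
  "ad_commutes br x R \<longleftrightarrow>
     (\<forall>\<xi> \<eta>. biv R (adT br x \<xi>) \<eta> + biv R \<xi> (adT br x \<eta>) = 0)"

text \<open>Trivectors are evaluated as alternating trilinear forms on g* with the
  convention (x wedge y wedge z)(xi,eta,zeta) = det. Then
  (x wedge D)(xi,eta,zeta) = xi(x) D(eta,zeta) - eta(x) D(xi,zeta) + zeta(x) D(xi,eta),
  and (1/2)[rho,rho](xi,eta,zeta) = cyclic sum of <xi, [rho^# eta, rho^# zeta]>
  (Schouten bracket extending the Lie bracket).\<close>

definition wedge_vec_biv :: "real^'n \<Rightarrow> real^'n^'n \<Rightarrow> real^'n \<Rightarrow> real^'n \<Rightarrow> real^'n \<Rightarrow> real" where
  "wedge_vec_biv x D \<xi> \<eta> \<zeta> =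
     (\<xi> \<bullet> x) * biv D \<eta> \<zeta> - (\<eta> \<bullet> x) * biv D \<xi> \<zeta> + (\<zeta> \<bullet> x) * biv D \<xi> \<eta>"

definition half_schouten :: "(real^'n \<Rightarrow> real^'n \<Rightarrow> real^'n) \<Rightarrow> real^'n^'n
    \<Rightarrow> real^'n \<Rightarrow> real^'n \<Rightarrow> real^'n \<Rightarrow> real" where
  "half_schouten br R \<xi> \<eta> \<zeta> =
     \<xi> \<bullet> br (sharp R \<eta>) (sharp R \<zeta>) + \<eta> \<bullet> br (sharp R \<zeta>) (sharp R \<xi>)
     + \<zeta> \<bullet> br (sharp R \<xi>) (sharp R \<eta>)"

text \<open>Triangular dynamical r-matrix over the abelian subalgebra with basis h,
  with linear coordinates lambda on h* (lambda :: real^'l).\<close>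

definition triangular_dynamical_r_matrix ::
  "(real^'n \<Rightarrow> real^'n \<Rightarrow> real^'n) \<Rightarrow> ('l::finite \<Rightarrow> real^'n) \<Rightarrow> (real^'l \<Rightarrow> real^'n^'n) \<Rightarrow> bool" where
  "triangular_dynamical_r_matrix br h r \<longleftrightarrow>
     smooth_map r \<and> (\<forall>lam. wedge2 (r lam))
     \<and> (\<forall>lam i. ad_commutes br (h i) (r lam))
     \<and> (\<forall>lam \<xi> \<eta> \<zeta>.
          (\<Sum>i\<in>UNIV. wedge_vec_biv (h i) (frechet_derivative r (at lam) (axis i 1)) \<xi> \<eta> \<zeta>)
          + half_schouten br (r lam) \<xi> \<eta> \<zeta> = 0)"

definition annih :: "('l \<Rightarrow> real^'n) \<Rightarrow> (real^'n) set" where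
  "annih h = {\<xi>. \<forall>i. \<xi> \<bullet> h i = 0}"

definition g_lam :: "('l \<Rightarrow> real^'n) \<Rightarrow> (real^'l \<Rightarrow> real^'n^'n) \<Rightarrow> real^'l \<Rightarrow> (real^'n) set" where
  "g_lam h r lam = {x + y | x y. x \<in> span (range h) \<and> y \<in> sharp (r lam) ` annih h}"

text \<open>The Poisson bivector pi = sum_i h_i^L wedge d/dlambda^i + r(lambda)^L at a point
  (lambda, g) of M = h* x G, read in the left trivialisation
  T_(lambda,g) M = h* x g (i.e. R^l x R^n); its cotangent space is R^l x g*.
  pi((alpha,xi),(beta,eta)) = sum_i (xi(h_i) beta_i - eta(h_i) alpha_i) + r(lambda)(xi,eta).
  pi_sharp is the induced map T* M -> T M, and the rank of pi at the point
  is the dimension of its image.\<close>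

definition pi_sharp :: "('l::finite \<Rightarrow> real^'n) \<Rightarrow> (real^'l \<Rightarrow> real^'n^'n) \<Rightarrow> real^'l
    \<Rightarrow> ((real^'l) \<times> (real^'n)) \<Rightarrow> ((real^'l) \<times> (real^'n))" where
  "pi_sharp h r lam p =
     ((\<chi> i. snd p \<bullet> h i), sharp (r lam) (snd p) - (\<Sum>i\<in>UNIV. (fst p $ i) *\<^sub>R h i))"

definition poisson_rank :: "('l::finite \<Rightarrow> real^'n) \<Rightarrow> (real^'l \<Rightarrow> real^'n^'n) \<Rightarrow> real^'l \<Rightarrow> nat" where
  "poisson_rank h r lam = dim (range (pi_sharp h r lam))"

end

theory Submission
  imports Defs
begin


lemma adT_inner:
  assumes "bilinear br"
  shows "adT br x \<xi> \<bullet> y = \<xi> \<bullet> br x y"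
proof -
  have lin: "linear (br x)" using assms unfolding bilinear_def by auto
  have "adT br x \<xi> \<bullet> y = (\<Sum>j\<in>UNIV. (\<xi> \<bullet> br x (axis j 1)) * y $ j)"
    by (simp add: adT_def inner_vec_def)
  also have "\<dots> = \<xi> \<bullet> (\<Sum>j\<in>UNIV. y $ j *\<^sub>R br x (axis j 1))"
    by (simp add: inner_sum_right mult.commute)
  also have "(\<Sum>j\<in>UNIV. y $ j *\<^sub>R br x (axis j 1)) = br x (\<Sum>j\<in>UNIV. y $ j *\<^sub>R axis j 1)"
    by (simp add: linear_sum[OF lin] linear_scale[OF lin])
  also have "(\<Sum>j\<in>UNIV. y $ j *\<^sub>R axis j (1::real)) = y"
    using basis_expansion[of y] by (simp add: scalar_mult_eq_scaleR)
  finally show ?thesis .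
qed

lemma sharp_inner: "u \<bullet> sharp R w = biv R w u"
  by (metis sharp_def biv_def dot_lmul_matrix inner_commute transpose_matrix_vector)

lemma biv_skew: "wedge2 R \<Longrightarrow> biv R a b = - biv R b a"
proof -
  assume "wedge2 R"
  then have "transpose R = - R" by (simp add: wedge2_def)
  have "a \<bullet> (R *v b) = (transpose R *v a) \<bullet> b"
    by (metis dot_lmul_matrix transpose_matrix_vector)
  also have "transpose R *v a = - (R *v a)" using \<open>transpose R = - R\<close>
    by (simp add: vec_eq_iff matrix_vector_mult_def sum_negf)
  finally show ?thesis unfolding biv_def by (simp add: inner_commute)
qed



definition PiF :: "('l::finite \<Rightarrow> real^'n) \<Rightarrow> real^'n^'n \<Rightarrow> ((real^'l) \<times> (real^'n)) \<Rightarrow> ((real^'l) \<times> (real^'n)) \<Rightarrow> real" where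
  "PiF h R x y = fst x \<bullet> (\<chi> i. snd y \<bullet> h i) + snd x \<bullet> sharp R (snd y) - snd x \<bullet> (\<Sum>i\<in>UNIV. fst y $ i *\<^sub>R h i)"

definition Aop :: "(real^'n \<Rightarrow> real^'n \<Rightarrow> real^'n) \<Rightarrow> ('l::finite \<Rightarrow> real^'n) \<Rightarrow> real^'n^'n \<Rightarrow> ('l \<Rightarrow> real^'n^'n)
   \<Rightarrow> real^'n \<Rightarrow> ((real^'l) \<times> (real^'n)) \<Rightarrow> ((real^'l) \<times> (real^'n))" where
  "Aop br h R D e x = ((\<chi> i. biv (D i) e (snd x)),
     - adT br (sharp R e) (snd x) + (1/2) *\<^sub>R adT br (sharp R (snd x)) e
     - (1/2) *\<^sub>R (\<Sum>i\<in>UNIV. fst x $ i *\<^sub>R adT br (h i) e))"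

lemma inner_chi: "(p::real^'l) \<bullet> (\<chi> i. f i) = (\<Sum>i\<in>UNIV. p $ i * f i)"
  by (simp add: inner_vec_def)

lemma PiF_expand:
  "PiF h R (p, q) (b, w) = (\<Sum>i\<in>UNIV. p $ i * (w \<bullet> h i)) + q \<bullet> sharp R w - (\<Sum>i\<in>UNIV. b $ i * (q \<bullet> h i))"
  unfolding PiF_def by (simp add: inner_chi inner_sum_right)

lemma q_h:
  assumes bil: "bilinear br" and sk: "\<forall>x y. br x y = - br y x" and w2: "wedge2 R"
    and adc: "\<forall>i. ad_commutes br (h i) R" and ab: "\<forall>i j. br (h i) (h j) = 0"
  shows "(- adT br (sharp R e) \<xi> + (1/2) *\<^sub>R adT br (sharp R \<xi>) e
     - (1/2) *\<^sub>R (\<Sum>j\<in>UNIV. \<alpha> $ j *\<^sub>R adT br (h j) e)) \<bullet> h i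
     = (1/2) * (adT br (h i) e \<bullet> sharp R \<xi>)"
proof -
  have K1: "\<And>a b c. adT br a b \<bullet> c = b \<bullet> br a c" using adT_inner[OF bil] by blast
  have t1: "adT br (sharp R e) \<xi> \<bullet> h i = - (adT br (h i) e \<bullet> sharp R \<xi>)"
  proof -
    have "adT br (sharp R e) \<xi> \<bullet> h i = \<xi> \<bullet> br (sharp R e) (h i)" by (rule K1)
    also have "\<dots> = - (\<xi> \<bullet> br (h i) (sharp R e))" by (simp only: sk[rule_format, of "sharp R e" "h i"] inner_minus_right)
    also have "\<xi> \<bullet> br (h i) (sharp R e) = adT br (h i) \<xi> \<bullet> sharp R e" by (rule K1[symmetric])
    finally have "adT br (sharp R e) \<xi> \<bullet> h i = - (adT br (h i) \<xi> \<bullet> sharp R e)" .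
    also have "adT br (h i) \<xi> \<bullet> sharp R e = biv R e (adT br (h i) \<xi>)" by (rule sharp_inner)
    also have "\<dots> = - biv R (adT br (h i) e) \<xi>"
    proof -
      have "biv R (adT br (h i) e) \<xi> + biv R e (adT br (h i) \<xi>) = 0"
        using adc unfolding ad_commutes_def by blast
      then show ?thesis by linarith
    qed
    also have "\<dots> = biv R \<xi> (adT br (h i) e)" using biv_skew[OF w2, of \<xi> "adT br (h i) e"] by linarith
    also have "\<dots> = adT br (h i) e \<bullet> sharp R \<xi>" by (simp add: sharp_inner)
    finally show ?thesis .
  qed
  have t2: "adT br (sharp R \<xi>) e \<bullet> h i = - (adT br (h i) e \<bullet> sharp R \<xi>)"
  proof -
    have "adT br (sharp R \<xi>) e \<bullet> h i = e \<bullet> br (sharp R \<xi>) (h i)" by (rule K1)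
    also have "\<dots> = - (e \<bullet> br (h i) (sharp R \<xi>))" by (simp only: sk[rule_format, of "sharp R \<xi>" "h i"] inner_minus_right)
    also have "e \<bullet> br (h i) (sharp R \<xi>) = adT br (h i) e \<bullet> sharp R \<xi>" by (rule K1[symmetric])
    finally show ?thesis .
  qed
  have t3: "adT br (h j) e \<bullet> h i = 0" for j using K1 ab by simp
  show ?thesis
    by (simp add: inner_diff_left inner_add_left inner_sum_left t1 t2 t3)
qed

lemma key_identity:
  assumes bil: "bilinear br" and sk: "\<forall>x y. br x y = - br y x" and w2: "wedge2 R"
    and adc: "\<forall>i. ad_commutes br (h i) R" and ab: "\<forall>i j. br (h i) (h j) = 0"
    and cybe: "\<forall>\<xi> \<eta> \<zeta>. (\<Sum>i\<in>UNIV. wedge_vec_biv (h i) (D i) \<xi> \<eta> \<zeta>) + half_schouten br R \<xi> \<eta> \<zeta> = 0"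
  shows "(\<Sum>i\<in>UNIV. (e \<bullet> h i) * biv (D i) (snd y) (snd x))
     = PiF h R (Aop br h R D e x) y + PiF h R x (Aop br h R D e y)"
proof -
  obtain \<alpha> \<xi> where x: "x = (\<alpha>, \<xi>)" by (cases x)
  obtain \<beta> \<eta> where y: "y = (\<beta>, \<eta>)" by (cases y)
  define S where "S = sharp R"
  define X where "X = S e"
  define w where "w j = adT br (h j) e" for j
  define qx where "qx = - adT br X \<xi> + (1/2) *\<^sub>R adT br (S \<xi>) e - (1/2) *\<^sub>R (\<Sum>i\<in>UNIV. \<alpha> $ i *\<^sub>R w i)"
  define qy where "qy = - adT br X \<eta> + (1/2) *\<^sub>R adT br (S \<eta>) e - (1/2) *\<^sub>R (\<Sum>i\<in>UNIV. \<beta> $ i *\<^sub>R w i)"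
  have K1: "\<And>a b c. adT br a b \<bullet> c = b \<bullet> br a c" using adT_inner[OF bil] by blast
  have Ax: "Aop br h R D e x = ((\<chi> i. biv (D i) e \<xi>), qx)"
    by (simp add: Aop_def x qx_def X_def S_def w_def)
  have Ay: "Aop br h R D e y = ((\<chi> i. biv (D i) e \<eta>), qy)"
    by (simp add: Aop_def y qy_def X_def S_def w_def)
  have qxh: "qx \<bullet> h i = (1/2) * (w i \<bullet> S \<xi>)" for i
    unfolding qx_def X_def S_def w_def by (rule q_h[OF bil sk w2 adc ab])
  have qyh: "qy \<bullet> h i = (1/2) * (w i \<bullet> S \<eta>)" for i
    unfolding qy_def X_def S_def w_def by (rule q_h[OF bil sk w2 adc ab])
  define SA where "SA = (\<Sum>i\<in>UNIV. \<alpha> $ i * (w i \<bullet> S \<eta>))"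
  define SB where "SB = (\<Sum>i\<in>UNIV. \<beta> $ i * (w i \<bullet> S \<xi>))"
  define F1 where "F1 = (\<Sum>i\<in>UNIV. biv (D i) e \<xi> * (\<eta> \<bullet> h i))"
  define F2 where "F2 = (\<Sum>i\<in>UNIV. biv (D i) e \<eta> * (\<xi> \<bullet> h i))"
  have P1: "PiF h R (Aop br h R D e x) y = F1 + qx \<bullet> S \<eta> - (1/2) * SB"
    unfolding Ax y PiF_expand F1_def SB_def S_def
    by (simp add: qxh S_def sum_distrib_left mult.assoc mult.left_commute)
  have P2: "PiF h R x (Aop br h R D e y) = (1/2) * SA + \<xi> \<bullet> S qy - F2"
    unfolding Ay x PiF_expand F2_def SA_def S_def
    by (simp add: qyh S_def sum_distrib_left mult.assoc mult.left_commute)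
  have xiSqy: "\<xi> \<bullet> S qy = - (qy \<bullet> S \<xi>)"
    unfolding S_def sharp_inner using biv_skew[OF w2, of qy \<xi>] by simp
  have qxS: "qx \<bullet> S \<eta> = - (adT br X \<xi> \<bullet> S \<eta>) + (1/2) * (adT br (S \<xi>) e \<bullet> S \<eta>) - (1/2) * SA"
    unfolding qx_def SA_def by (simp add: inner_diff_left inner_add_left inner_sum_left)
  have qyS: "qy \<bullet> S \<xi> = - (adT br X \<eta> \<bullet> S \<xi>) + (1/2) * (adT br (S \<eta>) e \<bullet> S \<xi>) - (1/2) * SB"
    unfolding qy_def SB_def by (simp add: inner_diff_left inner_add_left inner_sum_left)
  have cy: "(\<Sum>i\<in>UNIV. wedge_vec_biv (h i) (D i) e \<eta> \<xi>) + half_schouten br R e \<eta> \<xi> = 0"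
    using cybe by blast
  have wsum: "(\<Sum>i\<in>UNIV. wedge_vec_biv (h i) (D i) e \<eta> \<xi>)
      = (\<Sum>i\<in>UNIV. (e \<bullet> h i) * biv (D i) \<eta> \<xi>) - F1 + F2"
    unfolding wedge_vec_biv_def F1_def F2_def
    by (simp add: sum.distrib sum_subtractf inner_commute mult.commute)
  have c1: "\<xi> \<bullet> br X (S \<eta>) = adT br X \<xi> \<bullet> S \<eta>" by (rule K1[symmetric])
  have c2: "\<eta> \<bullet> br (S \<xi>) X = - (adT br X \<eta> \<bullet> S \<xi>)"
    by (simp only: K1 sk[rule_format, of "S \<xi>" X] inner_minus_right)
  have c3: "e \<bullet> br (S \<eta>) (S \<xi>) = adT br (S \<eta>) e \<bullet> S \<xi>" by (rule K1[symmetric])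
  have c4: "adT br (S \<eta>) e \<bullet> S \<xi> = - (adT br (S \<xi>) e \<bullet> S \<eta>)"
    by (simp only: K1 sk[rule_format, of "S \<xi>" "S \<eta>"] inner_minus_right)
  have hs: "half_schouten br R e \<eta> \<xi> = e \<bullet> br (S \<eta>) (S \<xi>) + \<eta> \<bullet> br (S \<xi>) X + \<xi> \<bullet> br X (S \<eta>)"
    unfolding half_schouten_def S_def X_def by simp
  show ?thesis
    unfolding P1 P2 using cy wsum hs c1 c2 c3 c4 xiSqy qxS qyS x y by simp
qed



lemma picard_exists:
  fixes M :: "real \<Rightarrow> 'e::euclidean_space \<Rightarrow> 'e"
  assumes lin: "\<And>s. linear (M s)"
    and cont: "\<And>f. continuous_on {0..1} f \<Longrightarrow> continuous_on {0..1} (\<lambda>s. M s (f s))"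
    and bnd: "\<And>s x. s \<in> {0..1} \<Longrightarrow> norm (M s x) \<le> K * norm x"
    and K: "0 \<le> K" "K < 1"
  shows "\<exists>v. v 0 = x0 \<and> (\<forall>s\<in>{0..1}. (v has_vector_derivative M s (v s)) (at s within {0..1}))"
proof -
  define c where "c = (\<lambda>s::real. max 0 (min 1 s))"
  have c01: "c s \<in> {0..1}" for s by (simp add: c_def)
  have cid: "s \<in> {0..1} \<Longrightarrow> c s = s" for s by (simp add: c_def)
  have ccont: "continuous_on UNIV c" unfolding c_def by (intro continuous_intros)
  define G where "G f = (\<lambda>s. x0 + integral {0..c s} (\<lambda>t. M t (apply_bcontfun f t)))" for f :: "real \<Rightarrow>\<^sub>C 'e"
  have gcont: "continuous_on {0..1} (\<lambda>t. M t (apply_bcontfun f t))" for f :: "real \<Rightarrow>\<^sub>C 'e"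
    by (rule cont) simp
  have gint: "(\<lambda>t. M t (apply_bcontfun f t)) integrable_on {0..1}" for f :: "real \<Rightarrow>\<^sub>C 'e"
    using gcont integrable_continuous_interval by blast
  have Gin: "G f \<in> bcontfun" for f
  proof -
    define I where "I u = x0 + integral {0..u} (\<lambda>t. M t (apply_bcontfun f t))" for u
    have Icont: "continuous_on {0..1} I"
      unfolding I_def by (intro continuous_intros indefinite_integral_continuous_1 gint)
    have "continuous_on UNIV (I \<circ> c)"
      by (rule continuous_on_compose[OF ccont]) (rule continuous_on_subset[OF Icont], use c01 in auto)
    moreover have "G f = I \<circ> c" by (auto simp: G_def I_def)
    moreover have "bounded (range (I \<circ> c))"
    proof -
      have "range (I \<circ> c) \<subseteq> I ` {0..1}" using c01 by auto
      moreover have "bounded (I ` {0..1})"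
        by (intro compact_imp_bounded compact_continuous_image Icont) simp
      ultimately show ?thesis using bounded_subset by blast
    qed
    ultimately show ?thesis by (simp add: bcontfun_def)
  qed
  define F where "F f = Bcontfun (G f)" for f
  have Fapp: "apply_bcontfun (F f) = G f" for f by (simp add: F_def Bcontfun_inverse Gin)
  have contr: "dist (F f) (F g) \<le> K * dist f g" for f g
  proof (rule dist_bound)
    fix s
    have sub: "{0..c s} \<subseteq> {0..1}" using c01[of s] by auto
    have i1: "(\<lambda>t. M t (apply_bcontfun f t)) integrable_on {0..c s}"
      by (rule integrable_on_subinterval[OF gint]) (use sub in auto)
    have i2: "(\<lambda>t. M t (apply_bcontfun g t)) integrable_on {0..c s}"
      by (rule integrable_on_subinterval[OF gint]) (use sub in auto)
    have eq: "G f s - G g s = integral {0..c s} (\<lambda>t. M t (apply_bcontfun f t - apply_bcontfun g t))"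
      unfolding G_def using integral_diff[OF i1 i2] by (simp add: linear_diff[OF lin])
    have hi: "((\<lambda>t. M t (apply_bcontfun f t - apply_bcontfun g t)) has_integral
        integral {0..c s} (\<lambda>t. M t (apply_bcontfun f t - apply_bcontfun g t))) (cbox 0 (c s))"
      using integrable_diff[OF i1 i2] by (simp add: linear_diff[OF lin] integrable_integral)
    have "norm (integral {0..c s} (\<lambda>t. M t (apply_bcontfun f t - apply_bcontfun g t))) \<le> (K * dist f g) * Henstock_Kurzweil_Integration.content (cbox 0 (c s))"
    proof (rule has_integral_bound[OF _ hi])
      show "0 \<le> K * dist f g" using K by simp
      fix t assume "t \<in> cbox 0 (c s)"
      then have t01: "t \<in> {0..1}" using sub by auto
      have "norm (M t (apply_bcontfun f t - apply_bcontfun g t)) \<le> K * norm (apply_bcontfun f t - apply_bcontfun g t)"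
        by (rule bnd[OF t01])
      also have "\<dots> \<le> K * dist f g"
        using dist_bounded[of f t g] K by (intro mult_left_mono) (auto simp: dist_norm)
      finally show "norm (M t (apply_bcontfun f t - apply_bcontfun g t)) \<le> K * dist f g" .
    qed
    also have "\<dots> \<le> K * dist f g"
    proof -
      have "Henstock_Kurzweil_Integration.content (cbox 0 (c s)) \<le> 1" using c01[of s] by simp
      moreover have "0 \<le> K * dist f g" using K by simp
      ultimately show ?thesis by (simp add: mult_left_le)
    qed
    finally show "dist (apply_bcontfun (F f) s) (apply_bcontfun (F g) s) \<le> K * dist f g"
      by (simp add: Fapp dist_norm eq)
  qed
  obtain f where ff: "F f = f" using banach_fix_type[OF K, of F] contr by blast
  define v where "v = apply_bcontfun f"
  have veq: "v s = x0 + integral {0..s} (\<lambda>t. M t (v t))" if "s \<in> {0..1}" for s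
  proof -
    have "v s = G f s" unfolding v_def by (metis Fapp ff)
    then show ?thesis using cid[OF that] by (simp add: G_def v_def)
  qed
  have "v 0 = x0" using veq[of 0] by simp
  moreover have "(v has_vector_derivative M s (v s)) (at s within {0..1})" if s: "s \<in> {0..1}" for s
  proof -
    have "((\<lambda>u. integral {0..u} (\<lambda>t. M t (v t))) has_vector_derivative M s (v s)) (at s within {0..1})"
      by (rule integral_has_vector_derivative[OF _ s]) (simp add: v_def gcont)
    note d1 = this
    have "((\<lambda>u. x0 + integral {0..u} (\<lambda>t. M t (v t))) has_vector_derivative M s (v s)) (at s within {0..1})"
      using has_vector_derivative_add[OF has_vector_derivative_const[of x0] d1] by simp
    then show ?thesis
      using has_vector_derivative_transform[OF s, of v "\<lambda>u. x0 + integral {0..u} (\<lambda>t. M t (v t))"] veq by blast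
  qed
  ultimately show ?thesis by blast
qed



lemma rank_le_transport:
  fixes P0 P1 T :: "'e::euclidean_space \<Rightarrow> 'e"
  assumes l0: "linear P0" and l1: "linear P1" and eq: "\<And>x y. x \<bullet> P0 y = T x \<bullet> P1 (T y)"
  shows "dim (range P0) \<le> dim (range P1)"
proof -
  define L where "L z = (\<Sum>b\<in>Basis. (T b \<bullet> z) *\<^sub>R b)" for z
  have lL: "linear L" unfolding L_def
    by (simp add: linear_iff inner_add_right scaleR_add_left sum.distrib scaleR_sum_right)
  have "P0 y = L (P1 (T y))" for y
  proof -
    have "P0 y = (\<Sum>b\<in>Basis. (P0 y \<bullet> b) *\<^sub>R b)" by (simp add: euclidean_representation)
    also have "\<dots> = (\<Sum>b\<in>Basis. (T b \<bullet> P1 (T y)) *\<^sub>R b)" by (simp add: inner_commute eq)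
    finally show ?thesis by (simp add: L_def)
  qed
  then have "range P0 \<subseteq> L ` range P1" by auto
  then have "dim (range P0) \<le> dim (L ` range P1)" by (rule dim_subset)
  also have "\<dots> \<le> dim (range P1)" by (rule dim_image_le[OF lL])
  finally show ?thesis .
qed

lemma skew_rad_even:
  fixes b :: "'e::euclidean_space \<Rightarrow> 'e \<Rightarrow> real"
  assumes bil: "bilinear b" and sk: "\<And>x y. b x y = - b y x"
  shows "subspace S \<Longrightarrow> even (dim S - dim {x\<in>S. \<forall>y\<in>S. b x y = 0})"
proof (induction "dim S" arbitrary: S rule: less_induct)
  case less
  have linl: "linear (\<lambda>x. b x y)" for y using bil unfolding bilinear_def by auto
  have linr: "linear (\<lambda>y. b x y)" for x using bil unfolding bilinear_def by auto
  have bl_add: "b (x + z) y = b x y + b z y" for x z y using linear_add[OF linl] by blast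
  have bl_diff: "b (x - z) y = b x y - b z y" for x z y using linear_diff[OF linl] by blast
  have bl_sc: "b (c *\<^sub>R x) y = c * b x y" for c x y using linear_scale[OF linl] by simp
  have br_add: "b y (x + z) = b y x + b y z" for x z y using linear_add[OF linr] by blast
  have br_diff: "b y (x - z) = b y x - b y z" for x z y using linear_diff[OF linr] by blast
  have br_sc: "b y (c *\<^sub>R x) = c * b y x" for c x y using linear_scale[OF linr] by simp
  have b0: "b x x = 0" for x using sk[of x x] by simp
  show ?case
  proof (cases "\<forall>x\<in>S. \<forall>y\<in>S. b x y = 0")
    case True
    then have "{x\<in>S. \<forall>y\<in>S. b x y = 0} = S" by auto
    then show ?thesis by simp
  next
    case False
    then obtain u v0 where u: "u \<in> S" and v0: "v0 \<in> S" and nz: "b u v0 \<noteq> 0" by auto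
    define v where "v = (1 / b u v0) *\<^sub>R v0"
    have v: "v \<in> S" unfolding v_def using v0 less.prems by (simp add: subspace_scale)
    have buv: "b u v = 1" unfolding v_def using nz by (simp add: br_sc)
    have bvu: "b v u = -1" using buv sk[of v u] by simp
    define S' where "S' = {x\<in>S. b x u = 0 \<and> b x v = 0}"
    have subS': "subspace S'" unfolding S'_def subspace_def
      using less.prems by (auto simp: subspace_0 subspace_add subspace_scale bl_add bl_sc linear_0[OF linl])
    have S'S: "S' \<subseteq> S" unfolding S'_def by auto
    define U where "U = span {u, v}"
    have subU: "subspace U" unfolding U_def by simp
    have US: "U \<subseteq> S" unfolding U_def using u v less.prems by (simp add: span_minimal)
    define p where "p x = x - b x v *\<^sub>R u + b x u *\<^sub>R v" for x
    have pS': "p x \<in> S'" if "x \<in> S" for x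
    proof -
      have "p x \<in> S" unfolding p_def using that u v less.prems
        by (simp add: subspace_add subspace_diff subspace_scale)
      moreover have "b (p x) u = 0" unfolding p_def by (simp add: bl_add bl_diff bl_sc b0 bvu)
      moreover have "b (p x) v = 0" unfolding p_def by (simp add: bl_add bl_diff bl_sc b0 buv)
      ultimately show ?thesis unfolding S'_def by auto
    qed
    have decomp: "x = p x + (b x v *\<^sub>R u - b x u *\<^sub>R v)" for x unfolding p_def by simp
    have sumS: "{x + y |x y. x \<in> S' \<and> y \<in> U} = S"
    proof
      show "{x + y |x y. x \<in> S' \<and> y \<in> U} \<subseteq> S"
        using S'S US less.prems by (auto intro: subspace_add)
      show "S \<subseteq> {x + y |x y. x \<in> S' \<and> y \<in> U}"
      proof
        fix x assume x: "x \<in> S"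
        have "b x v *\<^sub>R u - b x u *\<^sub>R v \<in> U" unfolding U_def
          by (intro span_diff span_scale span_base) auto
        then show "x \<in> {x + y |x y. x \<in> S' \<and> y \<in> U}" using pS'[OF x] decomp[of x] by blast
      qed
    qed
    have coef: "a = 0 \<and> c = 0" if "b (a *\<^sub>R u + c *\<^sub>R v) u = 0" "b (a *\<^sub>R u + c *\<^sub>R v) v = 0" for a c
      using that by (simp add: bl_add bl_sc b0 buv bvu)
    have spanuv: "\<exists>a c. x = a *\<^sub>R u + c *\<^sub>R v" if "x \<in> span {u, v}" for x
    proof -
      have "x \<in> {x. \<exists>k. x - k *\<^sub>R u \<in> span {v}}" using that span_insert[of u "{v}"] by simp
      then obtain k where "x - k *\<^sub>R u \<in> span {v}" by blast
      then obtain c where "x - k *\<^sub>R u = c *\<^sub>R v" using span_singleton[of v] by auto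
      then have "x = k *\<^sub>R u + c *\<^sub>R v" by (simp add: algebra_simps)
      then show ?thesis by blast
    qed
    have int0: "S' \<inter> U \<subseteq> {0}"
    proof
      fix x assume x: "x \<in> S' \<inter> U"
      have xU: "x \<in> span {u, v}" using x unfolding U_def by blast
      have xu: "b x u = 0" and xv: "b x v = 0" using x unfolding S'_def by blast+
      obtain a c where xe: "x = a *\<^sub>R u + c *\<^sub>R v" using spanuv[OF xU] by blast
      have "a = 0 \<and> c = 0" by (rule coef) (use xu xv xe in blast)+
      then show "x \<in> {0}" using xe by simp
    qed
    have "u \<noteq> v" using buv b0[of u] by auto
    have indep: "independent {u, v}"
    proof -
      have "v \<noteq> 0" using buv by (auto simp: br_sc[of u 0 0, simplified])
      then have "independent {v}" by simp
      moreover have "u \<notin> span {v}"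
      proof
        assume "u \<in> span {v}"
        then obtain c where "u = c *\<^sub>R v" by (auto simp: span_singleton)
        then show False using buv by (simp add: bl_sc b0)
      qed
      ultimately show ?thesis using \<open>u \<noteq> v\<close> by (simp add: independent_insert)
    qed
    have dimU: "dim U = 2" unfolding U_def using dim_span_eq_card_independent[OF indep] \<open>u \<noteq> v\<close> by simp
    have dimI: "dim (S' \<inter> U) = 0" using int0 by (simp add: dim_eq_0)
    have dimS: "dim S = dim S' + 2" using dim_sums_Int[OF subS' subU] sumS dimU dimI by simp
    define rad where "rad = {x\<in>S. \<forall>y\<in>S. b x y = 0}"
    have rad_eq: "{x\<in>S'. \<forall>y\<in>S'. b x y = 0} = rad"
    proof
      show "{x\<in>S'. \<forall>y\<in>S'. b x y = 0} \<subseteq> rad"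
      proof
        fix x assume x: "x \<in> {x\<in>S'. \<forall>y\<in>S'. b x y = 0}"
        then have xS: "x \<in> S" and xu: "b x u = 0" and xv: "b x v = 0" unfolding S'_def by auto
        have "b x y = 0" if y: "y \<in> S" for y
        proof -
          have "b x y = b x (p y) + (b y v * b x u - b y u * b x v)"
            using decomp[of y] by (metis br_add br_diff br_sc)
          then show ?thesis using x pS'[OF y] xu xv by simp
        qed
        then show "x \<in> rad" unfolding rad_def using xS by auto
      qed
      show "rad \<subseteq> {x\<in>S'. \<forall>y\<in>S'. b x y = 0}"
        unfolding rad_def S'_def using u v by auto
    qed
    have lt: "dim S' < dim S" using dimS by simp
    have IH: "even (dim S' - dim rad)" using less.hyps[OF lt subS'] rad_eq by simp
    have "rad \<subseteq> S'" using rad_eq by auto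
    then have "dim rad \<le> dim S'" by (rule dim_subset)
    then have "dim S - dim rad = (dim S' - dim rad) + 2" using dimS by simp
    then show ?thesis using IH unfolding rad_def by simp
  qed
qed

lemma skew_range_even:
  fixes P :: "'e::euclidean_space \<Rightarrow> 'e"
  assumes lin: "linear P" and sk: "\<And>x y. x \<bullet> P y = - (y \<bullet> P x)"
  shows "even (dim (range P))"
proof -
  have Padd: "P (a + c) = P a + P c" for a c using linear_add[OF lin] by blast
  have Psc: "P (r *\<^sub>R a) = r *\<^sub>R P a" for r a using linear_scale[OF lin] by blast
  have bil: "bilinear (\<lambda>x y. x \<bullet> P y)"
    unfolding bilinear_def linear_iff by (simp add: Padd Psc inner_add_right inner_add_left)
  have ker: "{x\<in>UNIV. \<forall>y\<in>UNIV. x \<bullet> P y = 0} = {x. P x = 0}"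
  proof -
    have "(\<forall>y. x \<bullet> P y = 0) \<longleftrightarrow> P x = 0" for x
    proof
      assume "\<forall>y. x \<bullet> P y = 0"
      then have "x \<bullet> P (P x) = 0" by blast
      then have "P x \<bullet> P x = 0" using sk[of x "P x"] by simp
      then show "P x = 0" by simp
    next
      assume "P x = 0"
      then show "\<forall>y. x \<bullet> P y = 0" using sk[of x] by simp
    qed
    then show ?thesis by auto
  qed
  have ker2: "{y \<in> UNIV. \<forall>x\<in>range P. orthogonal x y} = {x. P x = 0}"
  proof -
    have "(\<forall>z. orthogonal (P z) y) \<longleftrightarrow> P y = 0" for y
    proof
      assume "\<forall>z. orthogonal (P z) y"
      then have "P (P y) \<bullet> y = 0" unfolding orthogonal_def by blast
      then have "P y \<bullet> P y = 0" using sk[of "P y" y] by (simp add: inner_commute)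
      then show "P y = 0" by simp
    next
      assume "P y = 0"
      then show "\<forall>z. orthogonal (P z) y" unfolding orthogonal_def using sk[of _ y] by (simp add: inner_commute)
    qed
    then show ?thesis by auto
  qed
  have "dim {x. P x = 0} + dim (range P) = dim (UNIV :: 'e set)"
    using dim_subspace_orthogonal_to_vectors[of "range P" UNIV] ker2 lin
    by (simp add: subspace_UNIV linear_subspace_image)
  then have "dim (UNIV::'e set) - dim {x\<in>UNIV. \<forall>y\<in>UNIV. x \<bullet> P y = 0} = dim (range P)"
    using ker by simp
  moreover have "even (dim (UNIV::'e set) - dim {x\<in>UNIV. \<forall>y\<in>UNIV. x \<bullet> P y = 0})"
    using skew_rad_even[OF bil, of UNIV] sk subspace_UNIV by blast
  ultimately show ?thesis by simp
qed



lemma inner_chi0: "(p::real^'l) \<bullet> (\<chi> i. f i) = (\<Sum>i\<in>UNIV. p $ i * f i)"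
  by (simp add: inner_vec_def)

lemma indep_coef:
  fixes h :: "'l::finite \<Rightarrow> real^'n"
  assumes inj: "inj h" and ind: "independent (range h)" and s0: "(\<Sum>j\<in>UNIV. c j *\<^sub>R h j) = 0"
  shows "c j = 0"
proof -
  define u where "u v = c (inv h v)" for v
  have "(\<Sum>v\<in>range h. u v *\<^sub>R v) = (\<Sum>j\<in>UNIV. u (h j) *\<^sub>R h j)"
    using sum.reindex[of h UNIV "\<lambda>v. u v *\<^sub>R v"] inj by simp
  also have "\<dots> = 0" using s0 inj by (simp add: u_def)
  finally have "(\<Sum>v\<in>range h. u v *\<^sub>R v) = 0" .
  then have "\<forall>v\<in>range h. u v = 0" using ind unfolding independent_explicit by blast
  then show ?thesis using inj by (auto simp: u_def)
qed

lemma span_range_h: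
  fixes h :: "'l::finite \<Rightarrow> real^'n"
  assumes inj: "inj h" and x: "x \<in> span (range h)"
  shows "\<exists>c. x = (\<Sum>j\<in>UNIV. c j *\<^sub>R h j)"
proof -
  obtain u where "x = (\<Sum>v\<in>range h. u v *\<^sub>R v)" using x span_finite[of "range h"] by auto
  also have "\<dots> = (\<Sum>j\<in>UNIV. u (h j) *\<^sub>R h j)"
    using sum.reindex[of h UNIV "\<lambda>v. u v *\<^sub>R v"] inj by simp
  finally show ?thesis by (rule exI[of _ "\<lambda>j. u (h j)"])
qed

lemma dual_basis:
  fixes h :: "'l::finite \<Rightarrow> real^'n"
  assumes inj: "inj h" and ind: "independent (range h)"
  shows "\<exists>xi. \<forall>i j. xi i \<bullet> h j = (if i = j then 1 else 0)"
proof -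
  define Hm where "Hm \<xi> = (\<chi> j. \<xi> \<bullet> h j)" for \<xi> :: "real^'n"
  have linH: "linear Hm" unfolding Hm_def linear_iff by (simp add: vec_eq_iff inner_add_left)
  have surj: "range Hm = UNIV"
  proof (rule ccontr)
    assume ne: "range Hm \<noteq> UNIV"
    have sub: "subspace (range Hm)" using linH by (simp add: linear_subspace_image)
    have "dim (range Hm) < DIM(real^'l)"
    proof -
      have "dim (range Hm) \<le> DIM(real^'l)" by (rule dim_subset_UNIV)
      moreover have "dim (range Hm) \<noteq> DIM(real^'l)"
      proof
        assume "dim (range Hm) = DIM(real^'l)"
        then have "span (range Hm) = UNIV" using dim_eq_full[of "range Hm"] by simp
        moreover have "span (range Hm) = range Hm" using sub by (simp add: span_eq_iff)
        ultimately show False using ne by simp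
      qed
      ultimately show ?thesis by simp
    qed
    then obtain c :: "real^'l" where c0: "c \<noteq> 0" and orth: "\<And>y. y \<in> span (range Hm) \<Longrightarrow> orthogonal c y"
      by (metis orthogonal_to_subspace_exists)
    define z where "z = (\<Sum>j\<in>UNIV. c $ j *\<^sub>R h j)"
    have "c \<bullet> Hm \<xi> = \<xi> \<bullet> z" for \<xi>
      by (simp add: Hm_def z_def inner_chi0 inner_sum_right)
    moreover have "c \<bullet> Hm z = 0" using orth[of "Hm z"] by (simp add: span_base orthogonal_def)
    ultimately have "z \<bullet> z = 0" by simp
    then have "z = 0" by simp
    then have "\<forall>j. c $ j = 0" using indep_coef[OF inj ind, of "\<lambda>j. c $ j"] unfolding z_def by blast
    then show False using c0 by (simp add: vec_eq_iff)
  qed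
  define xi where "xi i = (SOME \<xi>. Hm \<xi> = axis i 1)" for i
  have "Hm (xi i) = axis i 1" for i
    unfolding xi_def by (rule someI_ex) (use surj in \<open>metis UNIV_I image_iff\<close>)
  note hx = this
  have "xi i \<bullet> h j = (if i = j then 1 else 0)" for i j
    using arg_cong[OF hx[of i], of "\<lambda>v. v $ j"] by (simp add: Hm_def axis_def)
  then show ?thesis by blast
qed

lemma annih_subspace: "subspace (annih h)"
  unfolding annih_def subspace_def by (auto simp: inner_add_left)

lemma g_lam_subspace: "subspace (g_lam h r lam)"
proof -
  have "linear (sharp (r lam))" unfolding sharp_def by simp
  then have "subspace (sharp (r lam) ` annih h)" using annih_subspace by (rule linear_subspace_image)
  then show ?thesis unfolding g_lam_def by (intro subspace_sums subspace_span)
qed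

lemma rank_formula:
  fixes h :: "'l::finite \<Rightarrow> real^'n" and r :: "real^'l \<Rightarrow> real^'n^'n"
  assumes inj: "inj h" and ind: "independent (range h)"
  shows "poisson_rank h r lam = CARD('l) + dim (g_lam h r lam)"
proof -
  obtain xi where xi: "\<And>i j. xi i \<bullet> h j = (if i = j then 1 else 0)" using dual_basis[OF inj ind] by blast
  define S where "S = sharp (r lam)"
  have linS: "linear S" unfolding S_def sharp_def by simp
  have Sadd: "S (a + b) = S a + S b" for a b using linear_add[OF linS] by blast
  have Sdiff: "S (a - b) = S a - S b" for a b using linear_diff[OF linS] by blast
  define E where "E a = (\<Sum>i\<in>UNIV. a $ i *\<^sub>R xi i)" for a :: "real^'l"
  have Eh: "E a \<bullet> h j = a $ j" for a j
    by (simp add: E_def inner_sum_left xi if_distrib cong: if_cong)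
  define G where "G p = (fst p, snd p + S (E (fst p)))" for p :: "(real^'l) \<times> (real^'n)"
  have linE: "linear E" unfolding E_def linear_iff
    by (simp add: scaleR_add_left sum.distrib scaleR_sum_right)
  have linG: "linear G" unfolding G_def linear_iff
    using linear_add[OF linS] linear_scale[OF linS] linear_add[OF linE] linear_scale[OF linE]
    by (simp add: algebra_simps)
  have injG: "inj G" unfolding G_def inj_def by auto
  have req: "range (pi_sharp h r lam) = G ` (UNIV \<times> g_lam h r lam)"
  proof
    show "range (pi_sharp h r lam) \<subseteq> G ` (UNIV \<times> g_lam h r lam)"
    proof
      fix z assume "z \<in> range (pi_sharp h r lam)"
      then obtain \<alpha> \<xi> where z: "z = pi_sharp h r lam (\<alpha>, \<xi>)" by auto
      define a where "a = (\<chi> j. \<xi> \<bullet> h j)"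
      define \<eta> where "\<eta> = \<xi> - E a"
      have \<eta>a: "\<eta> \<in> annih h" unfolding annih_def \<eta>_def by (simp add: inner_diff_left Eh a_def)
      have sp: "- (\<Sum>i\<in>UNIV. \<alpha> $ i *\<^sub>R h i) \<in> span (range h)"
        by (intro span_neg span_sum span_scale span_base) auto
      define y where "y = - (\<Sum>i\<in>UNIV. \<alpha> $ i *\<^sub>R h i) + S \<eta>"
      have "y \<in> g_lam h r lam" unfolding g_lam_def y_def S_def using sp \<eta>a by blast
      moreover have "G (a, y) = z" unfolding G_def z pi_sharp_def y_def \<eta>_def
        by (simp add: a_def S_def[symmetric] Sdiff)
      ultimately show "z \<in> G ` (UNIV \<times> g_lam h r lam)" by force
    qed
    show "G ` (UNIV \<times> g_lam h r lam) \<subseteq> range (pi_sharp h r lam)"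
    proof
      fix z assume "z \<in> G ` (UNIV \<times> g_lam h r lam)"
      then obtain a y where z: "z = G (a, y)" and y: "y \<in> g_lam h r lam" by auto
      then obtain x0 \<eta> where y: "y = x0 + S \<eta>" and x0: "x0 \<in> span (range h)" and \<eta>: "\<eta> \<in> annih h"
        unfolding g_lam_def S_def by auto
      obtain c where c: "x0 = (\<Sum>j\<in>UNIV. c j *\<^sub>R h j)" using span_range_h[OF inj x0] by blast
      define \<xi> where "\<xi> = \<eta> + E a"
      have \<eta>0: "\<eta> \<bullet> h j = 0" for j using \<eta> unfolding annih_def by blast
      have xh: "(\<chi> j. \<xi> \<bullet> h j) = a"
      proof (subst vec_eq_iff, intro allI)
        fix j show "(\<chi> j. \<xi> \<bullet> h j) $ j = a $ j"
          unfolding \<xi>_def using \<eta>0[of j] Eh[of a j] by (simp add: inner_add_left)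
      qed
      have Sxi: "S \<xi> = S \<eta> + S (E a)" by (simp add: \<xi>_def Sadd)
      have "pi_sharp h r lam (- (\<chi> j. c j), \<xi>) = z"
        unfolding pi_sharp_def z G_def y c
        by (simp add: xh S_def[symmetric] Sxi sum_negf)
      then show "z \<in> range (pi_sharp h r lam)" by (metis rangeI)
    qed
  qed
  have "poisson_rank h r lam = dim (G ` (UNIV \<times> g_lam h r lam))"
    unfolding poisson_rank_def req ..
  also have "\<dots> = dim ((UNIV :: (real^'l) set) \<times> g_lam h r lam)"
  proof -
    have "inj_on G (span ((UNIV :: (real^'l) set) \<times> g_lam h r lam))" using injG by (meson inj_on_subset subset_UNIV)
    from dim_image_eq[OF linG this] show ?thesis .
  qed
  also have "\<dots> = dim (UNIV :: (real^'l) set) + dim (g_lam h r lam)"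
    by (rule dim_Times[OF subspace_UNIV g_lam_subspace])
  also have "dim (UNIV :: (real^'l) set) = CARD('l)" by simp
  finally show ?thesis .
qed



definition Tm :: "real^'n^'n \<Rightarrow> real^'n \<Rightarrow> real^'n" where
  "Tm R v = transpose R *v v"

lemma bilinear_Tm: "bilinear Tm"
  unfolding bilinear_def linear_iff Tm_def
  by (simp add: matrix_vector_right_distrib matrix_vector_mult_scaleR transpose_def
      matrix_vector_mult_def vec_eq_iff sum.distrib algebra_simps sum_distrib_left)

lemma bb_Tm: "bounded_bilinear Tm"
  using bilinear_Tm bilinear_conv_bounded_bilinear by blast

lemma sharp_Tm: "sharp R v = Tm R v" by (simp add: sharp_def Tm_def)

definition P0 :: "('l::finite \<Rightarrow> real^'n) \<Rightarrow> ((real^'l) \<times> (real^'n)) \<Rightarrow> ((real^'l) \<times> (real^'n))" where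
  "P0 h y = ((\<chi> i. snd y \<bullet> h i), - (\<Sum>i\<in>UNIV. fst y $ i *\<^sub>R h i))"

lemma linear_P0: "linear (P0 h)"
  unfolding linear_iff P0_def
  by (simp add: vec_eq_iff inner_add_left scaleR_add_left sum.distrib scaleR_sum_right algebra_simps)

lemma PiF_P0: "PiF h R x y = x \<bullet> P0 h y + snd x \<bullet> Tm R (snd y)"
  by (simp add: PiF_def P0_def inner_prod_def sharp_Tm)

lemma pi_sharp_PiF: "x \<bullet> pi_sharp h r lam y = PiF h (r lam) x y"
  by (simp add: PiF_def pi_sharp_def inner_prod_def inner_diff_right)

lemma linear_pi_sharp: "linear (pi_sharp h r lam)"
  unfolding linear_iff pi_sharp_def sharp_def
  by (simp add: vec_eq_iff inner_add_left scaleR_add_left sum.distrib scaleR_sum_right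
      algebra_simps matrix_vector_right_distrib matrix_vector_mult_scaleR)

lemma PiF_neg1: "PiF h R (- x) y = - PiF h R x y"
  by (simp add: PiF_P0)

lemma PiF_neg2: "PiF h R x (- y) = - PiF h R x y"
proof -
  have "P0 h (- y) = - P0 h y" using linear_neg[OF linear_P0] by blast
  moreover have "Tm R (- snd y) = - Tm R (snd y)"
    by (simp add: Tm_def vec_eq_iff matrix_vector_mult_def sum_negf)
  ultimately show ?thesis by (simp add: PiF_P0)
qed

lemma scaleR_mat_mult: "(c *\<^sub>R M) *v b = c *\<^sub>R (M *v b)" for M :: "real^'n^'m"
proof -
  have "((c *\<^sub>R M) *v b) $ i = (c *\<^sub>R (M *v b)) $ i" for i
  proof -
    have "((c *\<^sub>R M) *v b) $ i = (\<Sum>j\<in>UNIV. (c * M $ i $ j) * b $ j)"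
      by (simp add: matrix_vector_mult_def)
    also have "\<dots> = c * (\<Sum>j\<in>UNIV. M $ i $ j * b $ j)"
      by (simp add: sum_distrib_left mult.assoc)
    finally show ?thesis by (simp add: matrix_vector_mult_def)
  qed
  then show ?thesis by (simp add: vec_eq_iff)
qed

lemma biv_sum_mat: "biv (\<Sum>i\<in>I. c i *\<^sub>R M i) a b = (\<Sum>i\<in>I. c i * biv (M i) a b)"
proof (induction I rule: infinite_finite_induct)
  case (insert x F)
  then show ?case
    by (simp add: biv_def matrix_vector_mult_add_rdistrib inner_add_right
        scaleR_mat_mult)
qed (simp_all add: biv_def)



lemma transport:
  fixes br :: "real^'n \<Rightarrow> real^'n \<Rightarrow> real^'n"
    and h :: "'l::finite \<Rightarrow> real^'n"
    and r :: "real^'l \<Rightarrow> real^'n^'n"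
    and Dl :: "real^'l \<Rightarrow> 'l \<Rightarrow> real^'n^'n"
  assumes bil: "bilinear br" and sk: "\<forall>x y. br x y = - br y x"
    and w2: "\<forall>lam. wedge2 (r lam)"
    and adc: "\<forall>lam i. ad_commutes br (h i) (r lam)"
    and ab: "\<forall>i j. br (h i) (h j) = 0"
    and cybe: "\<forall>lam \<xi> \<eta> \<zeta>. (\<Sum>i\<in>UNIV. wedge_vec_biv (h i) (Dl lam i) \<xi> \<eta> \<zeta>) + half_schouten br (r lam) \<xi> \<eta> \<zeta> = 0"
    and rder: "\<forall>lam. (r has_derivative (\<lambda>u. \<Sum>i\<in>UNIV. u $ i *\<^sub>R Dl lam i)) (at lam)"
    and eh: "\<forall>j. e \<bullet> h j = d $ j"
    and flow: "\<forall>x. \<exists>v. v 0 = x \<and> (\<forall>s\<in>{0..1}. (v has_vector_derivative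
                 - Aop br h (r (a + s *\<^sub>R d)) (Dl (a + s *\<^sub>R d)) e (v s)) (at s within {0..1}))"
  shows "poisson_rank h r a \<le> poisson_rank h r (a + d)"
proof -
  define \<gamma> where "\<gamma> s = a + s *\<^sub>R d" for s :: real
  define A where "A s = Aop br h (r (\<gamma> s)) (Dl (\<gamma> s)) e" for s
  obtain V where V0: "\<And>x. V x 0 = x"
    and Vd: "\<And>x s. s \<in> {0..1} \<Longrightarrow> (V x has_vector_derivative - A s (V x s)) (at s within {0..1})"
    using flow unfolding A_def \<gamma>_def by metis
  define T where "T x = V x 1" for x
  have Rd: "((\<lambda>s. r (\<gamma> s)) has_vector_derivative (\<Sum>i\<in>UNIV. d $ i *\<^sub>R Dl (\<gamma> s) i)) (at s within {0..1})" for s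
  proof -
    have g: "(\<gamma> has_derivative (\<lambda>t. t *\<^sub>R d)) (at s within {0..1})"
      unfolding \<gamma>_def by (auto intro!: derivative_eq_intros)
    have "((\<lambda>s. r (\<gamma> s)) has_derivative (\<lambda>t. \<Sum>i\<in>UNIV. (t *\<^sub>R d) $ i *\<^sub>R Dl (\<gamma> s) i)) (at s within {0..1})"
      by (rule has_derivative_compose[OF g]) (use rder in blast)
    moreover have "(\<lambda>t. \<Sum>i\<in>UNIV. (t *\<^sub>R d) $ i *\<^sub>R Dl (\<gamma> s) i) = (\<lambda>t. t *\<^sub>R (\<Sum>i\<in>UNIV. d $ i *\<^sub>R Dl (\<gamma> s) i))"
      by (simp add: scaleR_sum_right)
    ultimately show ?thesis unfolding has_vector_derivative_def by simp
  qed
  have bl0: "bounded_linear (P0 h)" using linear_P0 linear_conv_bounded_linear by blast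
  have inv: "PiF h (r a) x y = PiF h (r (a + d)) (T x) (T y)" for x y
  proof -
    define Q where "Q s = PiF h (r (\<gamma> s)) (V x s) (V y s)" for s
    have Qd: "(Q has_derivative (\<lambda>t. 0)) (at s within {0..1})" if s: "s \<in> {0..1}" for s
    proof -
      define R' where "R' = (\<Sum>i\<in>UNIV. d $ i *\<^sub>R Dl (\<gamma> s) i)"
      define vx' where "vx' = - A s (V x s)"
      define vy' where "vy' = - A s (V y s)"
      have dx: "(V x has_vector_derivative vx') (at s within {0..1})" unfolding vx'_def by (rule Vd[OF s])
      have dy: "(V y has_vector_derivative vy') (at s within {0..1})" unfolding vy'_def by (rule Vd[OF s])
      have d1: "((\<lambda>s. V x s \<bullet> P0 h (V y s)) has_vector_derivative
          (V x s \<bullet> P0 h vy' + vx' \<bullet> P0 h (V y s))) (at s within {0..1})"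
        by (rule bounded_bilinear.has_vector_derivative[OF bounded_bilinear_inner dx
              bounded_linear.has_vector_derivative[OF bl0 dy]])
      have dsx: "((\<lambda>s. snd (V x s)) has_vector_derivative snd vx') (at s within {0..1})"
        by (rule bounded_linear.has_vector_derivative[OF bounded_linear_snd dx])
      have dsy: "((\<lambda>s. snd (V y s)) has_vector_derivative snd vy') (at s within {0..1})"
        by (rule bounded_linear.has_vector_derivative[OF bounded_linear_snd dy])
      have dT: "((\<lambda>s. Tm (r (\<gamma> s)) (snd (V y s))) has_vector_derivative
          (Tm (r (\<gamma> s)) (snd vy') + Tm R' (snd (V y s)))) (at s within {0..1})"
        unfolding R'_def by (rule bounded_bilinear.has_vector_derivative[OF bb_Tm Rd dsy])
      have d2: "((\<lambda>s. snd (V x s) \<bullet> Tm (r (\<gamma> s)) (snd (V y s))) has_vector_derivative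
          (snd (V x s) \<bullet> (Tm (r (\<gamma> s)) (snd vy') + Tm R' (snd (V y s))) + snd vx' \<bullet> Tm (r (\<gamma> s)) (snd (V y s))))
          (at s within {0..1})"
        by (rule bounded_bilinear.has_vector_derivative[OF bounded_bilinear_inner dsx dT])
      have dQ: "(Q has_vector_derivative
          ((V x s \<bullet> P0 h vy' + vx' \<bullet> P0 h (V y s)) +
           (snd (V x s) \<bullet> (Tm (r (\<gamma> s)) (snd vy') + Tm R' (snd (V y s))) + snd vx' \<bullet> Tm (r (\<gamma> s)) (snd (V y s)))))
          (at s within {0..1})"
        unfolding Q_def PiF_P0 by (rule has_vector_derivative_add[OF d1 d2])
      have "(V x s \<bullet> P0 h vy' + vx' \<bullet> P0 h (V y s)) +
           (snd (V x s) \<bullet> (Tm (r (\<gamma> s)) (snd vy') + Tm R' (snd (V y s))) + snd vx' \<bullet> Tm (r (\<gamma> s)) (snd (V y s)))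
          = PiF h (r (\<gamma> s)) (V x s) vy' + PiF h (r (\<gamma> s)) vx' (V y s) + snd (V x s) \<bullet> Tm R' (snd (V y s))"
        by (simp add: PiF_P0 inner_add_right algebra_simps)
      also have "\<dots> = - (PiF h (r (\<gamma> s)) (A s (V x s)) (V y s) + PiF h (r (\<gamma> s)) (V x s) (A s (V y s)))
           + snd (V x s) \<bullet> Tm R' (snd (V y s))"
        unfolding vx'_def vy'_def by (simp add: PiF_neg1 PiF_neg2)
      also have "snd (V x s) \<bullet> Tm R' (snd (V y s)) = (\<Sum>i\<in>UNIV. (e \<bullet> h i) * biv (Dl (\<gamma> s) i) (snd (V y s)) (snd (V x s)))"
        unfolding R'_def by (simp add: sharp_Tm[symmetric] sharp_inner biv_sum_mat eh)
      also have "\<dots> = PiF h (r (\<gamma> s)) (A s (V x s)) (V y s) + PiF h (r (\<gamma> s)) (V x s) (A s (V y s))"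
        unfolding A_def
        by (rule key_identity[OF bil sk]) (use w2 adc ab cybe in blast)+
      finally have "(V x s \<bullet> P0 h vy' + vx' \<bullet> P0 h (V y s)) +
           (snd (V x s) \<bullet> (Tm (r (\<gamma> s)) (snd vy') + Tm R' (snd (V y s))) + snd vx' \<bullet> Tm (r (\<gamma> s)) (snd (V y s)))
          = 0" by simp
      then have "(Q has_vector_derivative 0) (at s within {0..1})" using dQ by simp
      then show ?thesis unfolding has_vector_derivative_def by simp
    qed
    obtain c where "\<forall>s\<in>{0..1::real}. Q s = c"
      using has_derivative_zero_constant[of "{0..1::real}" Q] Qd by auto
    then have "Q 0 = Q 1" by auto
    then show ?thesis unfolding Q_def T_def \<gamma>_def by (simp add: V0)
  qed
  show ?thesis unfolding poisson_rank_def
  proof (rule rank_le_transport[OF linear_pi_sharp linear_pi_sharp])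
    fix x y show "x \<bullet> pi_sharp h r a y = T x \<bullet> pi_sharp h r (a + d) (T y)"
      by (simp add: pi_sharp_PiF inv)
  qed
qed



lemma br_add1: "bilinear br \<Longrightarrow> br (x + y) z = br x z + br y z"
  unfolding bilinear_def using linear_add[of "\<lambda>x. br x z" x y] by simp
lemma br_scale1: "bilinear br \<Longrightarrow> br (c *\<^sub>R x) z = c *\<^sub>R br x z"
  unfolding bilinear_def using linear_scale[of "\<lambda>x. br x z" c x] by simp
lemma adT_add1: "bilinear br \<Longrightarrow> adT br (x + y) \<xi> = adT br x \<xi> + adT br y \<xi>"
  unfolding adT_def by (simp add: vec_eq_iff br_add1 inner_add_right)
lemma adT_scale1: "bilinear br \<Longrightarrow> adT br (c *\<^sub>R x) \<xi> = c *\<^sub>R adT br x \<xi>"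
  unfolding adT_def by (simp add: vec_eq_iff br_scale1)
lemma adT_add2: "adT br x (\<xi> + \<eta>) = adT br x \<xi> + adT br x \<eta>"
  unfolding adT_def by (simp add: vec_eq_iff inner_add_left)
lemma adT_scale2: "adT br x (c *\<^sub>R \<xi>) = c *\<^sub>R adT br x \<xi>"
  unfolding adT_def by (simp add: vec_eq_iff)
lemma sharp_add: "sharp R (a + b) = sharp R a + sharp R b"
  unfolding sharp_def by (simp add: matrix_vector_right_distrib)
lemma sharp_scale: "sharp R (c *\<^sub>R a) = c *\<^sub>R sharp R a"
  unfolding sharp_def by (simp add: matrix_vector_mult_scaleR)
lemma biv_add2: "biv D (a + b) c = biv D a c + biv D b c"
  unfolding biv_def by (simp add: inner_add_left)
lemma biv_scale2: "biv D (t *\<^sub>R a) c = t * biv D a c"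
  unfolding biv_def by simp
lemma biv_add3: "biv D c (a + b) = biv D c a + biv D c b"
  unfolding biv_def by (simp add: matrix_vector_right_distrib inner_add_right)
lemma biv_scale3: "biv D c (t *\<^sub>R a) = t * biv D c a"
  unfolding biv_def by (simp add: matrix_vector_mult_scaleR)

lemma linear_Aop_x:
  assumes "bilinear br" shows "linear (Aop br h R D e)"
  unfolding linear_iff Aop_def
  using adT_add1[OF assms] adT_scale1[OF assms]
  by (simp add: vec_eq_iff adT_add2 adT_scale2 sharp_add sharp_scale biv_add3 biv_scale3
      scaleR_add_left sum.distrib scaleR_sum_right algebra_simps)

lemma linear_Aop_e:
  assumes "bilinear br" shows "linear (\<lambda>e. Aop br h R D e x)"
  unfolding linear_iff Aop_def
  using adT_add1[OF assms] adT_scale1[OF assms]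
  by (simp add: vec_eq_iff adT_add2 adT_scale2 sharp_add sharp_scale biv_add2 biv_scale2
      scaleR_add_left sum.distrib scaleR_sum_right algebra_simps)

lemma biv_Tm: "biv D e \<xi> = Tm D e \<bullet> \<xi>"
  unfolding biv_def Tm_def by (metis dot_lmul_matrix transpose_matrix_vector)

lemma cont_adT:
  assumes bb: "bounded_bilinear br" and f: "continuous_on S f" and g: "continuous_on S g"
  shows "continuous_on S (\<lambda>s. adT br (f s) (g s))"
  unfolding adT_def
  by (intro continuous_intros g bounded_bilinear.continuous_on[OF bb f] continuous_on_const)

lemma cont_Aop:
  assumes bil: "bilinear br" and rc: "continuous_on UNIV r"
    and dc: "\<And>i. continuous_on UNIV (\<lambda>lam. Dl lam i)"
  shows "continuous_on UNIV (\<lambda>lam. Aop br h (r lam) (Dl lam) e x)"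
proof -
  have bb: "bounded_bilinear br" using bil bilinear_conv_bounded_bilinear by blast
  have c1: "continuous_on UNIV (\<lambda>lam. sharp (r lam) e)"
    unfolding sharp_Tm by (rule bounded_bilinear.continuous_on[OF bb_Tm rc continuous_on_const])
  have c2: "continuous_on UNIV (\<lambda>lam. sharp (r lam) (snd x))"
    unfolding sharp_Tm by (rule bounded_bilinear.continuous_on[OF bb_Tm rc continuous_on_const])
  have c3: "continuous_on UNIV (\<lambda>lam. biv (Dl lam i) e (snd x))" for i
    unfolding biv_Tm
    by (intro continuous_intros bounded_bilinear.continuous_on[OF bb_Tm dc continuous_on_const])
  show ?thesis unfolding Aop_def
    by (intro continuous_intros c3 cont_adT[OF bb c1] cont_adT[OF bb c2])
qed

lemma Aop_bound:
  fixes xi :: "'l::finite \<Rightarrow> real^'n" and h :: "'l \<Rightarrow> real^'n" and x :: "(real^'l) \<times> (real^'n)"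
  assumes bil: "bilinear br"
  shows "norm (Aop br h R D (\<Sum>i\<in>UNIV. d $ i *\<^sub>R xi i) x)
     \<le> norm d * norm x * (\<Sum>i\<in>UNIV. \<Sum>b\<in>Basis. norm (Aop br h R D (xi i) b))"
proof -
  have le: "linear (\<lambda>e. Aop br h R D e y)" for y by (rule linear_Aop_e[OF bil])
  have lx: "linear (Aop br h R D e)" for e by (rule linear_Aop_x[OF bil])
  have "Aop br h R D (\<Sum>i\<in>UNIV. d $ i *\<^sub>R xi i) x = (\<Sum>i\<in>UNIV. Aop br h R D (d $ i *\<^sub>R xi i) x)"
    by (rule linear_sum[OF le[of x]])
  also have "\<dots> = (\<Sum>i\<in>UNIV. d $ i *\<^sub>R Aop br h R D (xi i) x)"
    by (rule sum.cong) (auto intro: linear_scale[OF le[of x]])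
  also have "\<dots> = (\<Sum>i\<in>UNIV. d $ i *\<^sub>R (\<Sum>b\<in>Basis. (x \<bullet> b) *\<^sub>R Aop br h R D (xi i) b))"
  proof -
    have "Aop br h R D (xi i) x = (\<Sum>b\<in>Basis. (x \<bullet> b) *\<^sub>R Aop br h R D (xi i) b)" for i
    proof -
      have "Aop br h R D (xi i) x = Aop br h R D (xi i) (\<Sum>b\<in>Basis. (x \<bullet> b) *\<^sub>R b)"
        by (simp add: euclidean_representation)
      also have "\<dots> = (\<Sum>b\<in>Basis. Aop br h R D (xi i) ((x \<bullet> b) *\<^sub>R b))"
        by (rule linear_sum[OF lx])
      also have "\<dots> = (\<Sum>b\<in>Basis. (x \<bullet> b) *\<^sub>R Aop br h R D (xi i) b)"
        by (rule sum.cong) (auto intro: linear_scale[OF lx])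
      finally show ?thesis .
    qed
    then show ?thesis by simp
  qed
  finally have eq: "Aop br h R D (\<Sum>i\<in>UNIV. d $ i *\<^sub>R xi i) x = (\<Sum>i\<in>UNIV. \<Sum>b\<in>Basis. (d $ i * (x \<bullet> b)) *\<^sub>R Aop br h R D (xi i) b)"
    by (simp add: scaleR_sum_right)
  have "norm (\<Sum>i\<in>UNIV. \<Sum>b\<in>Basis. (d $ i * (x \<bullet> b)) *\<^sub>R Aop br h R D (xi i) b)
      \<le> (\<Sum>i\<in>UNIV. \<Sum>b\<in>Basis. norm ((d $ i * (x \<bullet> b)) *\<^sub>R Aop br h R D (xi i) b))"
    by (intro order.trans[OF norm_sum] sum_mono norm_sum)
  also have "\<dots> \<le> (\<Sum>i\<in>UNIV. \<Sum>b\<in>Basis. norm d * norm x * norm (Aop br h R D (xi i) b))"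
  proof (intro sum_mono)
    fix i and b :: "(real^'l) \<times> (real^'n)" assume b: "b \<in> Basis"
    have "\<bar>d $ i * (x \<bullet> b)\<bar> \<le> norm d * norm x"
      unfolding abs_mult by (intro mult_mono component_le_norm_cart Basis_le_norm[OF b]) auto
    then show "norm ((d $ i * (x \<bullet> b)) *\<^sub>R Aop br h R D (xi i) b) \<le> norm d * norm x * norm (Aop br h R D (xi i) b)"
      by (simp add: mult_right_mono)
  qed
  also have "\<dots> = norm d * norm x * (\<Sum>i\<in>UNIV. \<Sum>b\<in>Basis. norm (Aop br h R D (xi i) b))"
    by (simp add: sum_distrib_left)
  finally show ?thesis using eq by simp
qed

lemma PiF_skew: "wedge2 R \<Longrightarrow> PiF h R x y = - PiF h R y x"
proof -
  assume w: "wedge2 R"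
  have a: "fst x \<bullet> (\<chi> i. snd y \<bullet> h i) = snd y \<bullet> (\<Sum>i\<in>UNIV. fst x $ i *\<^sub>R h i)"
    by (simp add: inner_chi inner_sum_right)
  have b: "fst y \<bullet> (\<chi> i. snd x \<bullet> h i) = snd x \<bullet> (\<Sum>i\<in>UNIV. fst y $ i *\<^sub>R h i)"
    by (simp add: inner_chi inner_sum_right)
  have c: "snd x \<bullet> sharp R (snd y) = - (snd y \<bullet> sharp R (snd x))"
    unfolding sharp_inner using biv_skew[OF w, of "snd y" "snd x"] by linarith
  show ?thesis unfolding PiF_def using a b c by simp
qed



lemma local_step:
  fixes br :: "real^'n \<Rightarrow> real^'n \<Rightarrow> real^'n"
    and h :: "'l::finite \<Rightarrow> real^'n"
    and r :: "real^'l \<Rightarrow> real^'n^'n"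
    and Dl :: "real^'l \<Rightarrow> 'l \<Rightarrow> real^'n^'n"
    and xi :: "'l \<Rightarrow> real^'n"
  assumes bil: "bilinear br" and sk: "\<forall>x y. br x y = - br y x"
    and w2: "\<forall>lam. wedge2 (r lam)"
    and adc: "\<forall>lam i. ad_commutes br (h i) (r lam)"
    and ab: "\<forall>i j. br (h i) (h j) = 0"
    and cybe: "\<forall>lam \<xi> \<eta> \<zeta>. (\<Sum>i\<in>UNIV. wedge_vec_biv (h i) (Dl lam i) \<xi> \<eta> \<zeta>) + half_schouten br (r lam) \<xi> \<eta> \<zeta> = 0"
    and rder: "\<forall>lam. (r has_derivative (\<lambda>u. \<Sum>i\<in>UNIV. u $ i *\<^sub>R Dl lam i)) (at lam)"
    and rc: "continuous_on UNIV r"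
    and dc: "\<And>i. continuous_on UNIV (\<lambda>lam. Dl lam i)"
    and xi: "\<And>i j. xi i \<bullet> h j = (if i = j then 1 else 0)"
  shows "\<exists>\<delta>>0. \<forall>a d. norm d < \<delta> \<and> (\<forall>s\<in>{0..1}. a + s *\<^sub>R d \<in> cball lam0 1)
            \<longrightarrow> poisson_rank h r a \<le> poisson_rank h r (a + d)"
proof -
  define E where "E d = (\<Sum>i\<in>UNIV. d $ i *\<^sub>R xi i)" for d :: "real^'l"
  have eh: "E d \<bullet> h j = d $ j" for d j
    by (simp add: E_def inner_sum_left xi if_distrib cong: if_cong)
  define g where "g lam = (\<Sum>i\<in>UNIV. \<Sum>b\<in>Basis. norm (Aop br h (r lam) (Dl lam) (xi i) b))" for lam
  have gc: "continuous_on UNIV g" unfolding g_def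
    by (intro continuous_intros cont_Aop[OF bil rc dc])
  obtain B0 where B0: "\<And>lam. lam \<in> cball lam0 1 \<Longrightarrow> g lam \<le> B0"
  proof -
    have "compact (g ` cball lam0 1)"
      by (rule compact_continuous_image[OF continuous_on_subset[OF gc]]) auto
    then have "bounded (g ` cball lam0 1)" by (rule compact_imp_bounded)
    then obtain B where B: "\<forall>y\<in>g ` cball lam0 1. norm y \<le> B" by (auto simp: bounded_iff)
    have "g lam \<le> B" if "lam \<in> cball lam0 1" for lam
      using B that by (auto dest!: bspec[of _ _ "g lam"] abs_le_D1)
    then show ?thesis using that by blast
  qed
  define B where "B = max B0 1"
  have Bpos: "B > 0" unfolding B_def by simp
  have gB: "lam \<in> cball lam0 1 \<Longrightarrow> g lam \<le> B" for lam using B0[of lam] unfolding B_def by simp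
  define \<delta> where "\<delta> = 1 / (2 * B)"
  have \<delta>pos: "\<delta> > 0" unfolding \<delta>_def using Bpos by simp
  show ?thesis
  proof (intro exI[of _ \<delta>] conjI allI impI \<delta>pos)
    fix a d assume ad: "norm d < \<delta> \<and> (\<forall>s\<in>{0..1}. a + s *\<^sub>R d \<in> cball lam0 1)"
    define M where "M s x = - Aop br h (r (a + s *\<^sub>R d)) (Dl (a + s *\<^sub>R d)) (E d) x" for s x
    define K where "K = norm d * B"
    have K0: "0 \<le> K" unfolding K_def using Bpos by simp
    have K1: "K < 1"
    proof -
      have "K < \<delta> * B" unfolding K_def using ad Bpos by (simp add: mult_strict_right_mono)
      also have "\<delta> * B = 1/2" unfolding \<delta>_def using Bpos by simp
      finally show ?thesis by simp
    qed
    have lin: "linear (M s)" for s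
    proof -
      have l: "linear (Aop br h (r (a + s *\<^sub>R d)) (Dl (a + s *\<^sub>R d)) (E d))" by (rule linear_Aop_x[OF bil])
      show ?thesis unfolding M_def linear_iff using linear_add[OF l] linear_scale[OF l] by simp
    qed
    have cAop: "continuous_on {0..1} (\<lambda>s. Aop br h (r (a + s *\<^sub>R d)) (Dl (a + s *\<^sub>R d)) (E d) b)" for b
    proof -
      have "continuous_on {0..1::real} (\<lambda>s. a + s *\<^sub>R d)" by (intro continuous_intros)
      then show ?thesis
        by (rule continuous_on_compose2[OF cont_Aop[OF bil rc dc]]) auto
    qed
    have cont: "continuous_on {0..1} (\<lambda>s. M s (f s))" if f: "continuous_on {0..1} f" for f
    proof -
      have eq: "M s (f s) = - (\<Sum>b\<in>Basis. (f s \<bullet> b) *\<^sub>R Aop br h (r (a + s *\<^sub>R d)) (Dl (a + s *\<^sub>R d)) (E d) b)" for s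
      proof -
        have l: "linear (Aop br h (r (a + s *\<^sub>R d)) (Dl (a + s *\<^sub>R d)) (E d))" by (rule linear_Aop_x[OF bil])
        have "Aop br h (r (a + s *\<^sub>R d)) (Dl (a + s *\<^sub>R d)) (E d) (f s)
            = Aop br h (r (a + s *\<^sub>R d)) (Dl (a + s *\<^sub>R d)) (E d) (\<Sum>b\<in>Basis. (f s \<bullet> b) *\<^sub>R b)"
          by (simp add: euclidean_representation)
        also have "\<dots> = (\<Sum>b\<in>Basis. Aop br h (r (a + s *\<^sub>R d)) (Dl (a + s *\<^sub>R d)) (E d) ((f s \<bullet> b) *\<^sub>R b))"
          by (rule linear_sum[OF l])
        also have "\<dots> = (\<Sum>b\<in>Basis. (f s \<bullet> b) *\<^sub>R Aop br h (r (a + s *\<^sub>R d)) (Dl (a + s *\<^sub>R d)) (E d) b)"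
          by (rule sum.cong) (auto intro: linear_scale[OF l])
        finally show ?thesis unfolding M_def by simp
      qed
      show ?thesis unfolding eq by (intro continuous_intros f cAop)
    qed
    have bnd: "norm (M s x) \<le> K * norm x" if s: "s \<in> {0..1}" for s x
    proof -
      have "norm (M s x) = norm (Aop br h (r (a + s *\<^sub>R d)) (Dl (a + s *\<^sub>R d)) (\<Sum>i\<in>UNIV. d $ i *\<^sub>R xi i) x)"
        unfolding M_def E_def by simp
      also have "\<dots> \<le> norm d * norm x * g (a + s *\<^sub>R d)"
        unfolding g_def by (rule Aop_bound[OF bil])
      also have "\<dots> \<le> norm d * norm x * B"
        using gB[of "a + s *\<^sub>R d"] ad s by (intro mult_left_mono) auto
      finally show ?thesis unfolding K_def by (simp add: algebra_simps)
    qed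
    have flow: "\<forall>x. \<exists>v. v 0 = x \<and> (\<forall>s\<in>{0..1}. (v has_vector_derivative
                 - Aop br h (r (a + s *\<^sub>R d)) (Dl (a + s *\<^sub>R d)) (E d) (v s)) (at s within {0..1}))"
    proof
      fix x0
      from picard_exists[of M K x0, OF lin cont bnd K0 K1]
      show "\<exists>v. v 0 = x0 \<and> (\<forall>s\<in>{0..1}. (v has_vector_derivative
                 - Aop br h (r (a + s *\<^sub>R d)) (Dl (a + s *\<^sub>R d)) (E d) (v s)) (at s within {0..1}))"
        unfolding M_def by blast
    qed
    show "poisson_rank h r a \<le> poisson_rank h r (a + d)"
      by (rule transport[OF bil sk w2 adc ab cybe rder _ flow]) (simp add: eh)
  qed
qed



theorem corollary2p4:
  fixes br :: "real^'n \<Rightarrow> real^'n \<Rightarrow> real^'n"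
    and h :: "'l::finite \<Rightarrow> real^'n"
    and r :: "real^'l \<Rightarrow> real^'n^'n"
  assumes "lie_algebra br"
    and "inj h" and "independent (range h)"
    and "\<forall>i j. br (h i) (h j) = 0"
    and "triangular_dynamical_r_matrix br h r"
  shows "\<exists>k::nat. even k
           \<and> (\<forall>lam. dim (g_lam h r lam) - dim (span (range h)) = k)
           \<and> (\<forall>lam. poisson_rank h r lam = 2 * CARD('l) + k)"
proof -
  note la = assms(1) and inj = assms(2) and ind = assms(3) and ab = assms(4) and tdr = assms(5)
  have bil: "bilinear br" and sk: "\<forall>x y. br x y = - br y x" using la unfolding lie_algebra_def by blast+
  have sm: "smooth_map r" and w2: "\<forall>lam. wedge2 (r lam)" and adc: "\<forall>lam i. ad_commutes br (h i) (r lam)"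
    and cy0: "\<forall>lam \<xi> \<eta> \<zeta>. (\<Sum>i\<in>UNIV. wedge_vec_biv (h i) (frechet_derivative r (at lam) (axis i 1)) \<xi> \<eta> \<zeta>)
          + half_schouten br (r lam) \<xi> \<eta> \<zeta> = 0"
    using tdr unfolding triangular_dynamical_r_matrix_def by blast+
  define Dl where "Dl lam i = frechet_derivative r (at lam) (axis i 1)" for lam i
  have C2: "C_k (Suc (Suc 0)) r" using sm unfolding smooth_map_def by blast
  then have rc: "continuous_on UNIV r" and rdiff: "\<And>x. r differentiable (at x)"
    and C1: "\<And>v. C_k (Suc 0) (\<lambda>x. frechet_derivative r (at x) v)" by auto
  have dc: "continuous_on UNIV (\<lambda>lam. Dl lam i)" for i
    using C1[of "axis i 1"] unfolding Dl_def by simp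
  have cybe: "\<forall>lam \<xi> \<eta> \<zeta>. (\<Sum>i\<in>UNIV. wedge_vec_biv (h i) (Dl lam i) \<xi> \<eta> \<zeta>) + half_schouten br (r lam) \<xi> \<eta> \<zeta> = 0"
    using cy0 unfolding Dl_def by blast
  have rder: "\<forall>lam. (r has_derivative (\<lambda>u. \<Sum>i\<in>UNIV. u $ i *\<^sub>R Dl lam i)) (at lam)"
  proof
    fix lam
    have hd: "(r has_derivative frechet_derivative r (at lam)) (at lam)"
      using rdiff frechet_derivative_works by blast
    have lf: "linear (frechet_derivative r (at lam))" using rdiff linear_frechet_derivative by blast
    have "frechet_derivative r (at lam) u = (\<Sum>i\<in>UNIV. u $ i *\<^sub>R Dl lam i)" for u
    proof -
      have "frechet_derivative r (at lam) u = frechet_derivative r (at lam) (\<Sum>i\<in>UNIV. u $ i *\<^sub>R axis i 1)"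
        using basis_expansion[of u] by (simp add: scalar_mult_eq_scaleR)
      also have "\<dots> = (\<Sum>i\<in>UNIV. frechet_derivative r (at lam) (u $ i *\<^sub>R axis i 1))"
        by (rule linear_sum[OF lf])
      also have "\<dots> = (\<Sum>i\<in>UNIV. u $ i *\<^sub>R Dl lam i)"
        unfolding Dl_def by (rule sum.cong) (auto intro: linear_scale[OF lf])
      finally show ?thesis .
    qed
    then have "frechet_derivative r (at lam) = (\<lambda>u. \<Sum>i\<in>UNIV. u $ i *\<^sub>R Dl lam i)" by (rule ext)
    then show "(r has_derivative (\<lambda>u. \<Sum>i\<in>UNIV. u $ i *\<^sub>R Dl lam i)) (at lam)" using hd by simp
  qed
  obtain xi where xi: "\<And>i j. xi i \<bullet> h j = (if i = j then 1 else 0)" using dual_basis[OF inj ind] by blast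
  define f where "f lam = poisson_rank h r lam" for lam
  have step: "\<exists>\<delta>>0. \<forall>a d. norm d < \<delta> \<and> (\<forall>s\<in>{0..1}. a + s *\<^sub>R d \<in> cball lam0 1)
            \<longrightarrow> f a \<le> f (a + d)" for lam0
    unfolding f_def by (rule local_step[OF bil sk w2 adc ab cybe rder rc dc xi])
  have loc: "\<exists>\<delta>>0. \<forall>lam1. dist lam1 lam0 < \<delta> \<longrightarrow> f lam0 = f lam1" for lam0
  proof -
    obtain \<delta> where \<delta>: "\<delta> > 0" and st: "\<And>a d. norm d < \<delta> \<Longrightarrow> (\<forall>s\<in>{0..1}. a + s *\<^sub>R d \<in> cball lam0 1)
            \<Longrightarrow> f a \<le> f (a + d)" using step[of lam0] by blast
    show ?thesis
    proof (intro exI[of _ "min \<delta> 1"] conjI allI impI)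
      show "min \<delta> 1 > 0" using \<delta> by simp
      fix lam1 assume d: "dist lam1 lam0 < min \<delta> 1"
      have n1: "norm (lam1 - lam0) < \<delta>" "norm (lam1 - lam0) < 1" using d by (auto simp: dist_norm)
      have "f lam0 \<le> f (lam0 + (lam1 - lam0))"
      proof (rule st)
        show "norm (lam1 - lam0) < \<delta>" by (rule n1(1))
        show "\<forall>s\<in>{0..1}. lam0 + s *\<^sub>R (lam1 - lam0) \<in> cball lam0 1"
        proof
          fix s :: real assume s: "s \<in> {0..1}"
          have "dist lam0 (lam0 + s *\<^sub>R (lam1 - lam0)) = \<bar>s\<bar> * norm (lam1 - lam0)" by (simp add: dist_norm)
          also have "\<dots> \<le> 1 * 1" using s n1 by (intro mult_mono) auto
          finally show "lam0 + s *\<^sub>R (lam1 - lam0) \<in> cball lam0 1" by simp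
        qed
      qed
      moreover have "f lam1 \<le> f (lam1 + (lam0 - lam1))"
      proof (rule st)
        show "norm (lam0 - lam1) < \<delta>" using n1(1) by (simp add: norm_minus_commute)
        show "\<forall>s\<in>{0..1}. lam1 + s *\<^sub>R (lam0 - lam1) \<in> cball lam0 1"
        proof
          fix s :: real assume s: "s \<in> {0..1}"
          have "lam0 - (lam1 + s *\<^sub>R (lam0 - lam1)) = (1 - s) *\<^sub>R (lam0 - lam1)" by (simp add: algebra_simps)
          then have "dist lam0 (lam1 + s *\<^sub>R (lam0 - lam1)) = \<bar>1 - s\<bar> * norm (lam1 - lam0)"
            by (simp add: dist_norm norm_minus_commute)
          also have "\<dots> \<le> 1 * 1" using s n1 by (intro mult_mono) auto
          finally show "lam1 + s *\<^sub>R (lam0 - lam1) \<in> cball lam0 1" by simp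
        qed
      qed
      ultimately show "f lam0 = f lam1" by simp
    qed
  qed
  have const: "f lam = f 0" for lam
  proof (rule connected_local_const[of UNIV lam 0 f])
    show "\<forall>a\<in>UNIV. \<forall>\<^sub>F b in at a within UNIV. f a = f b"
    proof
      fix a :: "real^'l"
      obtain \<delta> where "\<delta> > 0" "\<forall>lam1. dist lam1 a < \<delta> \<longrightarrow> f a = f lam1" using loc[of a] by blast
      then show "\<forall>\<^sub>F b in at a within UNIV. f a = f b" unfolding eventually_at by blast
    qed
  qed auto
  have rf: "f lam = CARD('l) + dim (g_lam h r lam)" for lam
    unfolding f_def by (rule rank_formula[OF inj ind])
  have dh: "dim (span (range h)) = CARD('l)"
    using dim_span_eq_card_independent[OF ind] inj by (simp add: card_image)
  have ge: "dim (g_lam h r lam) \<ge> CARD('l)" for lam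
  proof -
    have "span (range h) \<subseteq> g_lam h r lam"
    proof
      fix x assume x: "x \<in> span (range h)"
      have "0 \<in> annih h" by (simp add: annih_def)
      moreover have "sharp (r lam) 0 = 0" by (simp add: sharp_def)
      ultimately have "0 \<in> sharp (r lam) ` annih h" by force
      then show "x \<in> g_lam h r lam" unfolding g_lam_def using x by force
    qed
    then have "dim (span (range h)) \<le> dim (g_lam h r lam)" by (rule dim_subset)
    then show ?thesis using dh by simp
  qed
  have ev: "even (f 0)"
    unfolding f_def poisson_rank_def
  proof (rule skew_range_even[OF linear_pi_sharp])
    fix x y
    show "x \<bullet> pi_sharp h r 0 y = - (y \<bullet> pi_sharp h r 0 x)"
      unfolding pi_sharp_PiF using PiF_skew w2 by blast
  qed
  define k where "k = f 0 - 2 * CARD('l)"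
  show ?thesis
  proof (intro exI[of _ k] conjI allI)
    show "even k" unfolding k_def using ev by simp
    fix lam
    show "dim (g_lam h r lam) - dim (span (range h)) = k"
      unfolding k_def dh using rf[of lam] rf[of 0] const[of lam] by simp
    show "poisson_rank h r lam = 2 * CARD('l) + k"
      using rf[of lam] rf[of 0] const[of lam] ge[of 0] unfolding k_def f_def by simp
  qed
qed


end
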